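(* Let $R=(r_{st})$ be an $n\times n$ matrix over the complex numbers ($n\ge 2$). For $1\le i,j\le n$ let $R_{ij}$ be the matrix obtained from $R$ by replacing the $(i,j)$ entry by $0$ (all other entries unchanged). Let $l$ be the number of nonzero entries of $R$. Then $$(l-n)\,d_2(R)=\sum_{(i,j)\in I} d_2(R_{ij}),$$ where $I=\{(i,j): r_{ij}\ne 0,\ 1\le i,j\le n\}$.
   Context: For an $n\times n$ matrix $M=(m_{ij})$ ($n\ge 2$), the second immanant is $d_2(M)=\sum_{\sigma\in S_n}\chi_2(\sigma)\prod_{s=1}^n m_{s\sigma(s)}$, where $\chi_2$ is the irreducible character of the symmetric group $S_n$ corresponding to the partition $(2,1^{n-2})$. *)

theory Defs
  imports "HOL-Analysis.Analysis"
begin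

text \<open>Irreducible character of S_n for the partition (2,1^(n-2)), n = CARD('n):
  it is the sign character times the standard character (fixed points - 1).\<close>
definition chi2 :: "('n::finite \<Rightarrow> 'n) \<Rightarrow> int" where
  "chi2 \<sigma> = sign \<sigma> * (int (card {i. \<sigma> i = i}) - 1)"

definition d2 :: "complex^'n^'n \<Rightarrow> complex" where
  "d2 M = (\<Sum>\<sigma>\<in>{\<sigma>. \<sigma> permutes (UNIV :: 'n::finite set)}.
             of_int (chi2 \<sigma>) * (\<Prod>s\<in>UNIV. M $ s $ \<sigma> s))"

definition zero_entry :: "'a::zero^'n^'m \<Rightarrow> 'm \<Rightarrow> 'n \<Rightarrow> 'a^'n^'m" where
  "zero_entry R i j = (\<chi> s t. if s = i \<and> t = j then 0 else R $ s $ t)"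

end

theory Submission
  imports Defs
begin

lemma d2_zero_entry:
  "d2 (zero_entry R i j) = (\<Sum>\<sigma>\<in>{\<sigma>. \<sigma> permutes (UNIV :: 'n::finite set)}.
      of_int (chi2 \<sigma>) * (if \<sigma> i = j then 0 else (\<Prod>s\<in>UNIV. R $ s $ \<sigma> s)))"
  unfolding d2_def
proof (rule sum.cong[OF refl])
  fix \<sigma> :: "'n \<Rightarrow> 'n"
  show "of_int (chi2 \<sigma>) * (\<Prod>s\<in>UNIV. zero_entry R i j $ s $ \<sigma> s) =
        of_int (chi2 \<sigma>) * (if \<sigma> i = j then 0 else (\<Prod>s\<in>UNIV. R $ s $ \<sigma> s))"
  proof (cases "\<sigma> i = j")
    case True
    have "(\<Prod>s\<in>UNIV. zero_entry R i j $ s $ \<sigma> s) = 0"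
      by (rule prod_zero) (use True in \<open>auto simp: zero_entry_def\<close>)
    then show ?thesis using True by simp
  next
    case False
    have "(\<Prod>s\<in>UNIV. zero_entry R i j $ s $ \<sigma> s) = (\<Prod>s\<in>UNIV. R $ s $ \<sigma> s)"
      by (rule prod.cong) (use False in \<open>auto simp: zero_entry_def\<close>)
    then show ?thesis using False by simp
  qed
qed

lemma per_sigma:
  fixes R :: "complex^'n^'n" and \<sigma> :: "'n \<Rightarrow> 'n"
  defines "I \<equiv> {(i, j). R $ i $ j \<noteq> 0}"
  shows "(\<Sum>(i, j)\<in>I. (if \<sigma> i = j then 0 else (\<Prod>s\<in>UNIV. R $ s $ \<sigma> s)))
       = (of_nat (card I) - of_nat CARD('n)) * (\<Prod>s\<in>UNIV. R $ s $ \<sigma> s)"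
proof (cases "(\<Prod>s\<in>UNIV. R $ s $ \<sigma> s) = 0")
  case True
  then show ?thesis by (simp only: True if_cancel sum.neutral_const mult_zero_right case_prod_unfold)
next
  case False
  let ?P = "\<Prod>s\<in>UNIV. R $ s $ \<sigma> s"
  let ?G = "range (\<lambda>i. (i, \<sigma> i))"
  have fin: "finite I" by simp
  have GI: "?G \<subseteq> I" using False unfolding I_def by auto
  have cG: "card ?G = CARD('n)"
    by (rule card_image) (auto simp: inj_on_def)
  have "(\<Sum>(i, j)\<in>I. (if \<sigma> i = j then 0 else ?P)) = (\<Sum>p\<in>I. (if p \<in> ?G then 0 else ?P))"
    by (rule sum.cong) auto
  also have "\<dots> = (\<Sum>p\<in>I - ?G. ?P)"
    by (rule sum.mono_neutral_cong_right) (use fin in auto)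
  also have "\<dots> = of_nat (card I - card ?G) * ?P"
    using GI fin by (simp add: card_Diff_subset finite_subset)
  also have "\<dots> = (of_nat (card I) - of_nat CARD('n)) * ?P"
    using GI fin cG card_mono[OF fin GI] by (simp add: of_nat_diff)
  finally show ?thesis .
qed

theorem corollary3p4:
  fixes R :: "complex^'n^'n"
  assumes "CARD('n) \<ge> 2"
  shows "(of_nat (card {(i, j). R $ i $ j \<noteq> 0}) - of_nat CARD('n)) * d2 R
           = (\<Sum>(i, j)\<in>{(i, j). R $ i $ j \<noteq> 0}. d2 (zero_entry R i j))"
proof -
  let ?I = "{(i, j). R $ i $ j \<noteq> 0}"
  let ?S = "{\<sigma>. \<sigma> permutes (UNIV :: 'n set)}"
  have "(\<Sum>(i, j)\<in>?I. d2 (zero_entry R i j)) =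
     (\<Sum>(i, j)\<in>?I. \<Sum>\<sigma>\<in>?S. of_int (chi2 \<sigma>) * (if \<sigma> i = j then 0 else (\<Prod>s\<in>UNIV. R $ s $ \<sigma> s)))"
    by (simp add: d2_zero_entry)
  also have "\<dots> = (\<Sum>\<sigma>\<in>?S. \<Sum>(i, j)\<in>?I. of_int (chi2 \<sigma>) * (if \<sigma> i = j then 0 else (\<Prod>s\<in>UNIV. R $ s $ \<sigma> s)))"
    unfolding case_prod_unfold by (rule sum.swap)
  also have "\<dots> = (\<Sum>\<sigma>\<in>?S. of_int (chi2 \<sigma>) * (\<Sum>(i, j)\<in>?I. (if \<sigma> i = j then 0 else (\<Prod>s\<in>UNIV. R $ s $ \<sigma> s))))"
    by (simp add: sum_distrib_left case_prod_unfold)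
  also have "\<dots> = (\<Sum>\<sigma>\<in>?S. of_int (chi2 \<sigma>) * ((of_nat (card ?I) - of_nat CARD('n)) * (\<Prod>s\<in>UNIV. R $ s $ \<sigma> s)))"
    by (simp only: per_sigma)
  also have "\<dots> = (of_nat (card ?I) - of_nat CARD('n)) * d2 R"
    unfolding d2_def by (simp add: sum_distrib_left mult_ac)
  finally show ?thesis by simp
qed

end
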